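(* Let $(m_i)_{i\ge0}$ and $(M_i)_{i\ge0}$ be sequences of positive integers such that $\rho_{m_i-1}\cdots\rho_1\cdot p^{M_i}\le1$ for all $i\ge0$ (the empty product being $1$). Suppose that for some $\lambda_0\in\Lambda$ there is $z_0\in K(Q_{\lambda_0},B)$ whose itinerary for $Q_{\lambda_0}$ is $$\underbrace{0\ldots0}_{m_0}\underbrace{1\ldots1}_{M_0}\underbrace{0\ldots0}_{m_1}\underbrace{1\ldots1}_{M_1}\ldots\underbrace{0\ldots0}_{m_i}\underbrace{1\ldots1}_{M_i}\ldots.$$ Then the closed ball $D=\{z:|z-z_0|\le S\}$ is contained in $K(Q_{\lambda_0},B)$. If moreover $\lim_{i\to\infty}M_i=\infty$, then $D$ is a wandering disc for $Q_{\lambda_0}$ contained in $K(Q_{\lambda_0},B)$ which is not attracted to an attracting cycle.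
   Context: Let $p$ be a prime, $\mathbb C_p$ with $p$-adic absolute value, $|p|=1/p$. $\Lambda=\{\lambda\in\mathbb C_p:|\lambda-1|<1\}$, $P_\lambda(z)=\frac{\lambda}{p}z^p+\left(1-\frac{\lambda}{p}\right)z^{p+1}$, $\rho=p^{-1/(p-1)}$; $S>0$ is defined by $pS^{p-1}=\rho$; $\rho_0=1$ and $p\rho_n^p=\rho_{n-1}$ for $n\ge1$. Fix $\hat r\in|\mathbb C_p^*|$, $\hat r>1$, $B=\{z:|z|\le\hat r\}$; $\mathcal H(B)$ is the ring of power series $\sum a_iz^i$ convergent on $B$ with norm $\|f\|_B=\sup_i|a_i|\hat r^{\,i}$. Fix $Q\in\mathcal H(B)$ with $\|Q\|_B<\rho$, $Q^*_\lambda=P_\lambda+Q$, and let $h(\lambda)$ be the unique fixed point of $Q^*_\lambda$ in $\{z:|z-1|\le|Q(1)|/p\}$. Define $Q_\lambda(z)=P_\lambda(z+h(\lambda)-1)+Q(z+h(\lambda)-1)+1-h(\lambda)$ for $z\in B$, and $K(Q_\lambda,B)=\{z\in B:Q_\lambda^n(z)\in B\ \forall n\ge0\}$. With $B_0=\{z:|z|<1\}$, $B_1=\{z:|z-1|<1\}$ (one has $K(Q_\lambda,B)\subset B_0\sqcup B_1$), the itinerary of $z\in K(Q_\lambda,B)$ is $\theta_0\theta_1\ldots$ with $Q_\lambda^n(z)\in B_{\theta_n}$. A wandering disc is a ball $D$ with $Q^n_\lambda(D)\cap Q^m_\lambda(D)\ne\emptyset$ only if $n=m$; "not attracted to an attracting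 cycle" means no point of $D$ lies in an open ball contained in the basin of an attracting periodic orbit. *)

theory Defs
  imports "HOL-Computational_Algebra.Computational_Algebra"
begin

definition nonarch_abs :: "('a::field_char_0 \<Rightarrow> real) \<Rightarrow> bool" where
  "nonarch_abs av \<longleftrightarrow> (\<forall>x. av x \<ge> 0) \<and> (\<forall>x. av x = 0 \<longleftrightarrow> x = 0)
     \<and> (\<forall>x y. av (x * y) = av x * av y) \<and> (\<forall>x y. av (x + y) \<le> max (av x) (av y))"

definition v_lim :: "('a::field_char_0 \<Rightarrow> real) \<Rightarrow> (nat \<Rightarrow> 'a) \<Rightarrow> 'a \<Rightarrow> bool" where
  "v_lim av X L \<longleftrightarrow> (\<lambda>n. av (X n - L)) \<longlonglongrightarrow> 0"

definition v_cauchy :: "('a::field_char_0 \<Rightarrow> real) \<Rightarrow> (nat \<Rightarrow> 'a) \<Rightarrow> bool" where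
  "v_cauchy av X \<longleftrightarrow> (\<forall>e>0. \<exists>N. \<forall>m\<ge>N. \<forall>n\<ge>N. av (X m - X n) < e)"

text \<open>(F, av) is (isometrically isomorphic to) C_p: a complete, algebraically closed
  non-archimedean valued field of characteristic 0 with |p| = 1/p in which the
  algebraic numbers are dense (i.e. F is the completion of an algebraic closure of Q_p).\<close>
definition is_Cp :: "('a::field_char_0 \<Rightarrow> real) \<Rightarrow> nat \<Rightarrow> bool" where
  "is_Cp av p \<longleftrightarrow> prime p \<and> nonarch_abs av \<and> av (of_nat p) = 1 / real p
     \<and> (\<forall>X. v_cauchy av X \<longrightarrow> (\<exists>L. v_lim av X L))
     \<and> (\<forall>q :: 'a poly. degree q > 0 \<longrightarrow> (\<exists>z. poly q z = 0))
     \<and> (\<forall>x e. e > 0 \<longrightarrow> (\<exists>y. algebraic y \<and> av (x - y) < e))"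

section \<open>Power series on the closed ball B of radius rhat\<close>

definition in_HB :: "('a::field_char_0 \<Rightarrow> real) \<Rightarrow> real \<Rightarrow> (nat \<Rightarrow> 'a) \<Rightarrow> bool" where
  "in_HB av rhat a \<longleftrightarrow> (\<lambda>i. av (a i) * rhat ^ i) \<longlonglongrightarrow> 0"

definition ps_norm :: "('a::field_char_0 \<Rightarrow> real) \<Rightarrow> real \<Rightarrow> (nat \<Rightarrow> 'a) \<Rightarrow> real" where
  "ps_norm av rhat a = (SUP i. av (a i) * rhat ^ i)"

definition ps_eval :: "('a::field_char_0 \<Rightarrow> real) \<Rightarrow> (nat \<Rightarrow> 'a) \<Rightarrow> 'a \<Rightarrow> 'a" where
  "ps_eval av a z = (THE s. v_lim av (\<lambda>n. \<Sum>i<n. a i * z ^ i) s)"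

definition P_lam :: "nat \<Rightarrow> 'a::field_char_0 \<Rightarrow> 'a \<Rightarrow> 'a" where
  "P_lam p l z = l / of_nat p * z ^ p + (1 - l / of_nat p) * z ^ (p + 1)"

definition h_fix :: "('a::field_char_0 \<Rightarrow> real) \<Rightarrow> nat \<Rightarrow> (nat \<Rightarrow> 'a) \<Rightarrow> 'a \<Rightarrow> 'a" where
  "h_fix av p a l = (THE z. av (z - 1) \<le> av (ps_eval av a 1) / real p
                        \<and> P_lam p l z + ps_eval av a z = z)"

definition Q_lam :: "('a::field_char_0 \<Rightarrow> real) \<Rightarrow> nat \<Rightarrow> (nat \<Rightarrow> 'a) \<Rightarrow> 'a \<Rightarrow> 'a \<Rightarrow> 'a" where
  "Q_lam av p a l z = (let h = h_fix av p a l in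
      P_lam p l (z + h - 1) + ps_eval av a (z + h - 1) + 1 - h)"

definition K_set :: "('a::field_char_0 \<Rightarrow> real) \<Rightarrow> real \<Rightarrow> ('a \<Rightarrow> 'a) \<Rightarrow> 'a set" where
  "K_set av rhat f = {z. \<forall>n. av ((f ^^ n) z) \<le> rhat}"

definition rho :: "nat \<Rightarrow> real" where
  "rho p = real p powr (- 1 / (real p - 1))"

definition S_rad :: "nat \<Rightarrow> real" where
  "S_rad p = (rho p / real p) powr (1 / (real p - 1))"

primrec rho_seq :: "nat \<Rightarrow> nat \<Rightarrow> real" where
  "rho_seq p 0 = 1"
| "rho_seq p (Suc n) = root p (rho_seq p n / real p)"

primrec blk_start :: "(nat \<Rightarrow> nat) \<Rightarrow> (nat \<Rightarrow> nat) \<Rightarrow> nat \<Rightarrow> nat" where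
  "blk_start m M 0 = 0"
| "blk_start m M (Suc i) = blk_start m M i + m i + M i"

text \<open>The sequence 0^{m_0} 1^{M_0} 0^{m_1} 1^{M_1} ...\<close>
definition itin :: "(nat \<Rightarrow> nat) \<Rightarrow> (nat \<Rightarrow> nat) \<Rightarrow> nat \<Rightarrow> nat" where
  "itin m M n = (if \<exists>i. blk_start m M i \<le> n \<and> n < blk_start m M i + m i then 0 else 1)"

definition wandering_disc :: "('a \<Rightarrow> 'a) \<Rightarrow> 'a set \<Rightarrow> bool" where
  "wandering_disc f D \<longleftrightarrow> (\<forall>n k. (f ^^ n) ` D \<inter> (f ^^ k) ` D \<noteq> {} \<longrightarrow> n = k)"

definition has_vderiv :: "('a::field_char_0 \<Rightarrow> real) \<Rightarrow> ('a \<Rightarrow> 'a) \<Rightarrow> 'a \<Rightarrow> 'a \<Rightarrow> bool" where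
  "has_vderiv av f w d \<longleftrightarrow> (\<forall>e>0. \<exists>\<delta>>0. \<forall>z. 0 < av (z - w) \<and> av (z - w) < \<delta> \<longrightarrow>
       av ((f z - f w) / (z - w) - d) < e)"

definition attracting_cycle :: "('a::field_char_0 \<Rightarrow> real) \<Rightarrow> ('a \<Rightarrow> 'a) \<Rightarrow> 'a \<Rightarrow> nat \<Rightarrow> bool" where
  "attracting_cycle av f w k \<longleftrightarrow> k > 0 \<and> (f ^^ k) w = w
      \<and> (\<exists>d. has_vderiv av (f ^^ k) w d \<and> av d < 1)"

definition basin :: "('a::field_char_0 \<Rightarrow> real) \<Rightarrow> ('a \<Rightarrow> 'a) \<Rightarrow> 'a \<Rightarrow> nat \<Rightarrow> 'a set" where
  "basin av f w k = {z. \<exists>j<k. v_lim av (\<lambda>n. (f ^^ (n * k)) z) ((f ^^ j) w)}"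

definition not_attracted :: "('a::field_char_0 \<Rightarrow> real) \<Rightarrow> real \<Rightarrow> ('a \<Rightarrow> 'a) \<Rightarrow> 'a set \<Rightarrow> bool" where
  "not_attracted av rhat f D \<longleftrightarrow> \<not> (\<exists>z\<in>D. \<exists>c r w k. r > 0 \<and> av (z - c) < r
      \<and> w \<in> K_set av rhat f \<and> attracting_cycle av f w k
      \<and> {y. av (y - c) < r} \<subseteq> basin av f w k)"

end

theory Submission
  imports Defs
begin


locale nav =
  fixes av :: "'a::field_char_0 \<Rightarrow> real"
  assumes na: "nonarch_abs av"
begin

lemma nonneg[simp]: "av x \<ge> 0" using na unfolding nonarch_abs_def by blast
lemma zero_iff[simp]: "av x = 0 \<longleftrightarrow> x = 0" using na unfolding nonarch_abs_def by blast
lemma zero[simp]: "av 0 = 0" using zero_iff by blast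
lemma mult[simp]: "av (x * y) = av x * av y" using na unfolding nonarch_abs_def by blast
lemma ultra: "av (x + y) \<le> max (av x) (av y)" using na unfolding nonarch_abs_def by blast

lemma one[simp]: "av 1 = 1"
proof -
  have "av 1 = av 1 * av 1" using mult[of 1 1] by simp
  moreover have "av 1 \<noteq> 0" by simp
  ultimately show ?thesis by (metis mult_cancel_left1)
qed


lemma minus_one[simp]: "av (-1) = 1"
proof -
  have e: "av (-1) * av (-1) = 1" using mult[of "-1" "-1"] by simp
  have "(av (-1) - 1) * (av (-1) + 1) = 0" using e by (simp add: algebra_simps)
  moreover have "av (-1) + 1 > 0" using nonneg[of "-1"] by linarith
  ultimately show ?thesis by simp
qed

lemma minus[simp]: "av (- x) = av x"
  using mult[of "-1" x] by simp

lemma commute: "av (x - y) = av (y - x)"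
  by (metis minus minus_diff_eq)

lemma ultra_diff: "av (x - y) \<le> max (av x) (av y)"
  using ultra[of x "-y"] by simp

lemma tri: "av (x - z) \<le> max (av (x - y)) (av (y - z))"
  using ultra[of "x - y" "y - z"] by simp

lemma power[simp]: "av (x ^ n) = av x ^ n"
  by (induction n) auto

lemma inverse[simp]: "av (inverse x) = inverse (av x)"
proof (cases "x = 0")
  case False
  then have "av x * av (inverse x) = 1" using mult[of x "inverse x"] by simp
  moreover have "av x \<noteq> 0" using False by simp
  ultimately show ?thesis by (metis inverse_unique mult.commute)
qed simp

lemma divide[simp]: "av (x / y) = av x / av y"
  by (simp add: divide_inverse)

lemma of_nat_le: "av (of_nat n) \<le> 1"
proof (induction n)
  case (Suc n)
  then show ?case using ultra[of "of_nat n" 1] by (simp add: add.commute)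
qed simp

lemma strict: "av y < av x \<Longrightarrow> av (x + y) = av x"
proof -
  assume a: "av y < av x"
  have "av (x + y) \<le> av x" using ultra[of x y] a by simp
  moreover have "av x \<le> max (av (x + y)) (av y)" using ultra[of "x + y" "-y"] by simp
  ultimately show ?thesis using a by linarith
qed

lemma strict_diff: "av y < av x \<Longrightarrow> av (x - y) = av x"
  using strict[of "-y" x] by simp

lemma sum_le: "(\<And>i. i \<in> A \<Longrightarrow> av (f i) \<le> B) \<Longrightarrow> 0 \<le> B \<Longrightarrow> av (sum f A) \<le> B"
proof (induction A rule: infinite_finite_induct)
  case (insert x F)
  have "av (sum f (insert x F)) = av (f x + sum f F)" using insert.hyps by simp
  also have "\<dots> \<le> max (av (f x)) (av (sum f F))" by (rule ultra)
  also have "\<dots> \<le> B" using insert by simp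
  finally show ?case .
qed auto

lemma abs_diff: "\<bar>av x - av y\<bar> \<le> av (x - y)"
proof -
  have "av x \<le> max (av (x - y)) (av y)" using ultra[of "x - y" y] by simp
  moreover have "av y \<le> max (av (y - x)) (av x)" using ultra[of "y - x" x] by simp
  ultimately show ?thesis using commute[of x y] nonneg[of x] nonneg[of y] nonneg[of "x-y"] unfolding le_max_iff_disj by (smt (verit))
qed

lemma vlim_unique: "v_lim av X L \<Longrightarrow> v_lim av X L' \<Longrightarrow> L = L'"
proof -
  assume a: "v_lim av X L" "v_lim av X L'"
  have le: "av (L - L') \<le> av (X n - L) + av (X n - L')" for n
    using tri[where x=L and y="X n" and z=L'] commute[of L "X n"] nonneg[of "X n - L"] nonneg[of "X n - L'"]
    unfolding le_max_iff_disj by (smt (verit))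
  have "(\<lambda>n. av (X n - L) + av (X n - L')) \<longlonglongrightarrow> 0 + 0"
    using a unfolding v_lim_def by (intro tendsto_add) auto
  then have "av (L - L') \<le> 0 + 0"
    by (rule LIMSEQ_le_const) (use le in auto)
  then show ?thesis using nonneg[of "L - L'"] zero_iff[of "L - L'"] by simp
qed

lemma vlim_le: "v_lim av X L \<Longrightarrow> v_lim av Y L' \<Longrightarrow> (\<And>n. av (X n - Y n) \<le> C) \<Longrightarrow> av (L - L') \<le> C"
proof -
  assume a: "v_lim av X L" "v_lim av Y L'" and b: "\<And>n. av (X n - Y n) \<le> C"
  have le: "av (L - L') \<le> C + (av (X n - L) + av (Y n - L'))" for n
  proof -
    have "av (L - L') \<le> max (av (L - X n)) (av (X n - L'))" by (rule tri)
    moreover have "av (X n - L') \<le> max (av (X n - Y n)) (av (Y n - L'))" by (rule tri)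
    ultimately show ?thesis using b[of n] commute[of L "X n"] nonneg[of "X n - L"] nonneg[of "Y n - L'"] nonneg[of "X n - Y n"]
      unfolding le_max_iff_disj by (smt (verit))
  qed
  have "(\<lambda>n. C + (av (X n - L) + av (Y n - L'))) \<longlonglongrightarrow> C + (0 + 0)"
    using a unfolding v_lim_def by (intro tendsto_add) auto
  then have "av (L - L') \<le> C + (0 + 0)"
    by (rule LIMSEQ_le_const) (use le in auto)
  then show ?thesis by simp
qed

lemma vlim_const: "v_lim av (\<lambda>n. c) c" unfolding v_lim_def by simp
end



context nav begin
lemma pow_diff:
  assumes "av z \<le> R" "av z' \<le> R"
  shows "av (z ^ Suc i - z' ^ Suc i) \<le> av (z - z') * R ^ i"
proof (induction i)
  case 0 then show ?case by simp
next
  case (Suc i)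
  have R0: "R \<ge> 0" using assms(1) nonneg[of z] by linarith
  have eq: "z ^ Suc (Suc i) - z' ^ Suc (Suc i) = z * (z ^ Suc i - z' ^ Suc i) + (z - z') * z' ^ Suc i"
    by (simp add: algebra_simps)
  have b1: "av (z * (z ^ Suc i - z' ^ Suc i)) \<le> av (z - z') * R ^ Suc i"
  proof -
    have "av (z * (z ^ Suc i - z' ^ Suc i)) = av z * av (z ^ Suc i - z' ^ Suc i)" by simp
    also have "\<dots> \<le> R * (av (z - z') * R ^ i)"
      using Suc assms(1) R0 by (intro mult_mono) auto
    finally show ?thesis by (simp add: algebra_simps)
  qed
  have b2: "av ((z - z') * z' ^ Suc i) \<le> av (z - z') * R ^ Suc i"
    using assms(2) by (simp del: power_Suc) (intro mult_left_mono power_mono, auto)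
  show ?case unfolding eq using ultra[of "z * (z ^ Suc i - z' ^ Suc i)" "(z - z') * z' ^ Suc i"] b1 b2
    by linarith
qed
end

locale setting = nav av for av :: "'a::field_char_0 \<Rightarrow> real" +
  fixes p :: nat and rhat :: real and a :: "nat \<Rightarrow> 'a" and l :: 'a
  assumes Cp: "is_Cp av p"
    and rhat1: "rhat > 1"
    and HB: "in_HB av rhat a" and Qsmall: "ps_norm av rhat a < rho p"
    and lam: "av (l - 1) < 1"
begin

abbreviation "Nn \<equiv> ps_norm av rhat a"
abbreviation "Q \<equiv> ps_eval av a"

lemma prime_p: "prime p" using Cp unfolding is_Cp_def by blast
lemma p2: "p \<ge> 2" using prime_p prime_ge_2_nat by blast
lemma p2r: "real p \<ge> 2" using p2 by simp
lemma av_p: "av (of_nat p) = 1 / real p" using Cp unfolding is_Cp_def by blast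
lemma complete: "v_cauchy av X \<Longrightarrow> \<exists>L. v_lim av X L" using Cp unfolding is_Cp_def by blast

lemma coef_bdd: "bdd_above (range (\<lambda>i. av (a i) * rhat ^ i))"
proof -
  have "convergent (\<lambda>i. av (a i) * rhat ^ i)" using HB unfolding in_HB_def convergent_def by blast
  then have "Bseq (\<lambda>i. av (a i) * rhat ^ i)" by (rule convergent_imp_Bseq)
  then obtain K where "\<And>i. norm (av (a i) * rhat ^ i) \<le> K" unfolding Bseq_def by blast
  then have "\<And>i. av (a i) * rhat ^ i \<le> K" using abs_ge_self order_trans real_norm_def by metis
  then show ?thesis by (intro bdd_aboveI[of _ K]) auto
qed

lemma coef_le: "av (a i) * rhat ^ i \<le> Nn"
  unfolding ps_norm_def by (rule cSUP_upper[OF _ coef_bdd]) simp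

lemma Nn0: "Nn \<ge> 0"
proof -
  have "av (a 0) \<le> Nn" using coef_le[of 0] by simp
  then show ?thesis using nonneg[of "a 0"] by linarith
qed

lemma ps_conv:
  assumes z: "av z \<le> rhat"
  shows "v_lim av (\<lambda>n. \<Sum>i<n. a i * z ^ i) (Q z)"
proof -
  let ?S = "\<lambda>n. \<Sum>i<n. a i * z ^ i"
  have tb: "av (a i * z ^ i) \<le> av (a i) * rhat ^ i" for i
    using z by simp (intro mult_left_mono power_mono, auto)
  have cau: "v_cauchy av ?S"
    unfolding v_cauchy_def
  proof (intro allI impI)
    fix e :: real assume e: "e > 0"
    have "(\<lambda>i. av (a i) * rhat ^ i) \<longlonglongrightarrow> 0" using HB unfolding in_HB_def .
    then obtain N0 where N0: "\<forall>i\<ge>N0. norm (av (a i) * rhat ^ i - 0) < e / 2"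
      using e unfolding LIMSEQ_iff by (meson half_gt_zero)
    have N: "av (a i) * rhat ^ i < e / 2" if "i \<ge> N0" for i
      using N0 that by (auto simp: abs_less_iff)
    define N where "N = N0"
    note N = N[folded N_def]
    have key: "av (?S m - ?S n) \<le> e / 2" if "N \<le> n" "n \<le> m" for m n
    proof -
      have "?S m - ?S n = (\<Sum>i\<in>{n..<m}. a i * z ^ i)"
        using sum_diff_nat_ivl[of 0 n m "\<lambda>i. a i * z ^ i"] that by (simp add: lessThan_atLeast0)
      also have "av \<dots> \<le> e / 2"
      proof (rule sum_le)
        fix i assume "i \<in> {n..<m}"
        then have "i \<ge> N" using that by auto
        then show "av (a i * z ^ i) \<le> e / 2" using N[of i] tb[of i] by linarith
      qed (use e in simp)
      finally show ?thesis .
    qed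
    show "\<exists>N. \<forall>m\<ge>N. \<forall>n\<ge>N. av (?S m - ?S n) < e"
    proof (intro exI allI impI)
      fix m n assume "N \<le> m" "N \<le> n"
      then show "av (?S m - ?S n) < e"
      proof (cases "n \<le> m")
        case True then show ?thesis using key[of n m] \<open>N \<le> n\<close> e by linarith
      next
        case False then show ?thesis using key[of m n] \<open>N \<le> m\<close> e commute[of "?S m" "?S n"] by linarith
      qed
    qed
  qed
  obtain L where L: "v_lim av ?S L" using complete[OF cau] by blast
  have "Q z = L" unfolding ps_eval_def
    by (rule the_equality) (use L vlim_unique in auto)
  then show ?thesis using L by simp
qed

lemma Q_bound:
  assumes z: "av z \<le> rhat"
  shows "av (Q z) \<le> Nn"
proof -
  have "av ((\<Sum>i<n. a i * z ^ i) - 0) \<le> Nn" for n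
  proof -
    have "av (a i * z ^ i) \<le> Nn" for i
    proof -
      have "av (a i * z ^ i) \<le> av (a i) * rhat ^ i"
        using z by simp (intro mult_left_mono power_mono, auto)
      then show ?thesis using coef_le[of i] by linarith
    qed
    then show ?thesis using Nn0 by (simp add: sum_le)
  qed
  from vlim_le[OF ps_conv[OF z] vlim_const this] show ?thesis by simp
qed

lemma Q_lip:
  assumes z: "av z \<le> rhat" and z': "av z' \<le> rhat"
  shows "av (Q z - Q z') \<le> Nn * av (z - z')"
proof -
  have "av ((\<Sum>i<n. a i * z ^ i) - (\<Sum>i<n. a i * z' ^ i)) \<le> Nn * av (z - z')" for n
  proof -
    have "av (a i * z ^ i - a i * z' ^ i) \<le> Nn * av (z - z')" for i
    proof (cases i)
      case 0 then show ?thesis using Nn0 by simp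
    next
      case (Suc j)
      have "av (a i * z ^ i - a i * z' ^ i) = av (a i) * av (z ^ Suc j - z' ^ Suc j)"
        by (simp add: Suc right_diff_distrib[symmetric])
      also have "\<dots> \<le> av (a i) * (av (z - z') * rhat ^ j)"
        by (intro mult_left_mono pow_diff z z') simp
      also have "\<dots> \<le> av (a i) * (av (z - z') * rhat ^ i)"
        using rhat1 Suc by (intro mult_left_mono) (auto intro!: power_increasing)
      also have "\<dots> = (av (a i) * rhat ^ i) * av (z - z')" by simp
      also have "\<dots> \<le> Nn * av (z - z')"
        by (intro mult_right_mono coef_le) simp
      finally show ?thesis .
    qed
    then show ?thesis using Nn0
      by (simp add: sum_subtractf[symmetric] sum_le)
  qed
  from vlim_le[OF ps_conv[OF z] ps_conv[OF z'] this] show ?thesis .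
qed

end



lemma rho_facts:
  assumes p: "p \<ge> (2::nat)"
  shows "rho p > 0" "rho p ^ (p - 1) = 1 / real p" "rho p < 1" "rho p \<ge> 1 / real p"
proof -
  have pr: "real p > 1" using p by simp
  have pm: "real (p - 1) = real p - 1" using p by (simp add: of_nat_diff)
  show r0: "rho p > 0" unfolding rho_def using pr by simp
  have "rho p ^ (p - 1) = rho p powr real (p - 1)"
    using r0 by (simp add: powr_realpow)
  also have "\<dots> = real p powr ((- 1 / (real p - 1)) * (real p - 1))"
    unfolding rho_def pm by (simp add: powr_powr)
  also have "\<dots> = real p powr (- 1)" using pr by simp
  also have "\<dots> = 1 / real p" using pr by (simp add: powr_minus_divide)
  finally show e: "rho p ^ (p - 1) = 1 / real p" .
  show r1: "rho p < 1" unfolding rho_def using pr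
    by (intro powr_less_one) (auto simp: divide_neg_pos)
  have "rho p ^ (p - 1) \<le> rho p ^ 1"
    using r0 r1 p by (intro power_decreasing) auto
  then show "rho p \<ge> 1 / real p" using e by simp
qed

lemma S_facts:
  assumes p: "p \<ge> (2::nat)"
  shows "S_rad p > 0" "real p * S_rad p ^ (p - 1) = rho p" "S_rad p < rho p" "S_rad p < 1"
proof -
  note rf = rho_facts[OF p]
  have pr: "real p > 1" using p by simp
  have pm: "real (p - 1) = real p - 1" using p by (simp add: of_nat_diff)
  show s0: "S_rad p > 0" unfolding S_rad_def using rf pr by simp
  have "S_rad p ^ (p - 1) = S_rad p powr real (p - 1)"
    using s0 by (simp add: powr_realpow)
  also have "\<dots> = (rho p / real p) powr ((1 / (real p - 1)) * (real p - 1))"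
    unfolding S_rad_def pm using rf pr by (simp add: powr_powr)
  also have "\<dots> = rho p / real p" using pr rf by simp
  finally have e: "S_rad p ^ (p - 1) = rho p / real p" .
  then show "real p * S_rad p ^ (p - 1) = rho p" using pr by simp
  have "S_rad p ^ (p - 1) < rho p ^ (p - 1)"
    unfolding e rf(2) using rf pr by (simp add: divide_strict_right_mono)
  then show sr: "S_rad p < rho p"
    using power_less_imp_less_base rf(1) less_imp_le by blast
  then show "S_rad p < 1" using rf by linarith
qed

lemma rho_seq_facts:
  assumes p: "p \<ge> (2::nat)"
  shows "rho_seq p k > 0 \<and> rho p \<le> rho_seq p k \<and> rho_seq p k \<le> 1"
proof (induction k)
  case 0 then show ?case using rho_facts[OF p] by simp
next
  case (Suc k)
  note rf = rho_facts[OF p]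
  have pr: "real p > 1" using p by simp
  have p0: "0 < p" using p by simp
  have "rho p ^ p = rho p * rho p ^ (p - 1)" using p
    by (metis Suc_diff_1 p0 power_Suc)
  then have rp: "rho p ^ p = rho p / real p" using rf by simp
  have "root p (rho p / real p) = rho p"
    unfolding rp[symmetric] using p0 rf by (simp add: real_root_power_cancel)
  moreover have "root p (rho p / real p) \<le> root p (rho_seq p k / real p)"
    using Suc p0 pr by (simp add: divide_right_mono)
  moreover have "root p (rho_seq p k / real p) \<le> root p 1"
    using Suc p0 pr by (simp del: real_root_one)
  moreover have "root p (rho_seq p k / real p) > 0"
    using Suc p0 pr by simp
  moreover have "root p 1 = 1" using p0 by simp
  ultimately show ?case by (simp del: real_root_one)
qed

lemma rho_seq_pow:
  assumes p: "p \<ge> (2::nat)"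
  shows "real p * rho_seq p (Suc k) ^ p = rho_seq p k"
proof -
  have "rho_seq p (Suc k) ^ p = rho_seq p k / real p"
    using rho_seq_facts[OF p, of k] p by (simp add: real_root_pow_pos2)
  then show ?thesis using p by simp
qed




lemma pow_le_self: "0 \<le> (x::real) \<Longrightarrow> x \<le> 1 \<Longrightarrow> x ^ Suc i \<le> x"
  by (simp add: mult_left_le power_le_one)

lemma pow_le_S: "0 \<le> (x::real) \<Longrightarrow> x \<le> S \<Longrightarrow> S \<le> 1 \<Longrightarrow> i \<ge> 1 \<Longrightarrow> x ^ Suc i \<le> S * x"
proof -
  assume a: "0 \<le> x" "x \<le> S" "S \<le> 1" "i \<ge> 1"
  have "x ^ i \<le> x ^ 1" using a by (intro power_decreasing) auto
  then have "x ^ i \<le> S" using a by simp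
  then have "x * x ^ i \<le> x * S" using a by (intro mult_left_mono) auto
  then show ?thesis by (simp add: mult.commute)
qed

context setting begin

lemma p0: "(of_nat p :: 'a) \<noteq> 0" using p2 by simp
lemma av_l: "av l = 1"
proof -
  have "av (1 + (l - 1)) = av 1" by (rule strict) (use lam in simp)
  then show ?thesis by simp
qed
lemma av_al: "av (l / of_nat p) = real p" using av_l av_p by simp
lemma av_be: "av (1 - l / of_nat p) = real p"
proof -
  have "av (l / of_nat p - 1) = real p" using av_al p2r by (subst strict_diff) auto
  then show ?thesis using commute by metis
qed
lemma av_dvd: "p dvd n \<Longrightarrow> av (of_nat n :: 'a) \<le> 1 / real p"
proof -
  assume "p dvd n" then obtain k where "n = p * k" by blast
  then have "av (of_nat n :: 'a) = (1 / real p) * av (of_nat k :: 'a)" using av_p by simp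
  also have "\<dots> \<le> 1 / real p * 1" by (intro mult_left_mono of_nat_le) simp
  finally show ?thesis by simp
qed
lemma choose_p: "0 < j \<Longrightarrow> j < p \<Longrightarrow> av (of_nat (p choose j) :: 'a) \<le> 1 / real p"
  by (intro av_dvd dvd_choose_prime prime_p) auto
lemma choose_p1: "1 < j \<Longrightarrow> j < p \<Longrightarrow> av (of_nat (Suc p choose j) :: 'a) \<le> 1 / real p"
proof -
  assume j: "1 < j" "j < p"
  then obtain j' where j': "j = Suc j'" by (cases j) auto
  have "Suc p choose j = (p choose j') + (p choose j)" using j' by simp
  moreover have "p dvd (p choose j')" using j j' by (intro dvd_choose_prime prime_p) auto
  moreover have "p dvd (p choose j)" using j by (intro dvd_choose_prime prime_p) auto
  ultimately show ?thesis by (intro av_dvd) simp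
qed
lemma av_Sucp: "av (of_nat (Suc p) :: 'a) = 1"
proof -
  have "av (1 + of_nat p :: 'a) = 1" using av_p p2r by (subst strict) auto
  then show ?thesis by (simp add: add.commute)
qed

lemma expand: "(w + d :: 'a) ^ n - w ^ n = (\<Sum>i<n. of_nat (n choose Suc i) * d ^ Suc i * w ^ (n - Suc i))"
proof -
  have "(d + w) ^ n = (\<Sum>k\<le>n. of_nat (n choose k) * d ^ k * w ^ (n - k))" by (rule binomial_ring)
  also have "\<dots> = w ^ n + (\<Sum>i<n. of_nat (n choose Suc i) * d ^ Suc i * w ^ (n - Suc i))"
    by (subst sum.atMost_shift) simp
  finally show ?thesis by (simp add: add.commute)
qed

definition T1 :: "'a \<Rightarrow> 'a \<Rightarrow> nat \<Rightarrow> 'a" where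
  "T1 w d i = l / of_nat p * of_nat (p choose Suc i) * d ^ Suc i * w ^ (p - Suc i)"
definition T2 :: "'a \<Rightarrow> 'a \<Rightarrow> nat \<Rightarrow> 'a" where
  "T2 w d i = (1 - l / of_nat p) * of_nat (Suc p choose Suc i) * d ^ Suc i * w ^ (Suc p - Suc i)"

lemma P_expand: "P_lam p l (w + d) - P_lam p l w = (\<Sum>i<p. T1 w d i) + (\<Sum>i<Suc p. T2 w d i)"
proof -
  have "P_lam p l (w + d) - P_lam p l w = l / of_nat p * ((w + d) ^ p - w ^ p)
     + (1 - l / of_nat p) * ((w + d) ^ Suc p - w ^ Suc p)"
    unfolding P_lam_def by (simp add: algebra_simps)
  also have "\<dots> = (\<Sum>i<p. T1 w d i) + (\<Sum>i<Suc p. T2 w d i)"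
    unfolding expand T1_def T2_def by (simp add: sum_distrib_left mult.assoc distrib_left del: binomial_Suc_Suc)
  finally show ?thesis .
qed

lemma P_diff_bound:
  assumes "\<And>i. i < p \<Longrightarrow> av (T1 w d i) \<le> B" "\<And>i. i < Suc p \<Longrightarrow> av (T2 w d i) \<le> B" "B \<ge> 0"
  shows "av (P_lam p l (w + d) - P_lam p l w) \<le> B"
proof -
  have "av (\<Sum>i<p. T1 w d i) \<le> B" by (rule sum_le) (use assms in auto)
  moreover have "av (\<Sum>i<Suc p. T2 w d i) \<le> B" by (rule sum_le) (use assms in auto)
  ultimately show ?thesis unfolding P_expand using ultra[of "\<Sum>i<p. T1 w d i" "\<Sum>i<Suc p. T2 w d i"] by linarith
qed

lemma av_T1: "av (T1 w d i) = real p * av (of_nat (p choose Suc i) :: 'a) * av d ^ Suc i * av w ^ (p - Suc i)"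
  unfolding T1_def using av_l av_p by (simp del: power_Suc of_nat_Suc binomial_Suc_Suc)
lemma av_T2: "av (T2 w d i) = real p * av (of_nat (Suc p choose Suc i) :: 'a) * av d ^ Suc i * av w ^ (Suc p - Suc i)"
  unfolding T2_def using av_be by (simp del: power_Suc of_nat_Suc binomial_Suc_Suc)

lemma P_lip1:
  assumes w: "av w \<le> 1" and d: "av d \<le> 1"
  shows "av (P_lam p l (w + d) - P_lam p l w) \<le> real p * av d"
proof (rule P_diff_bound)
  have x: "av d ^ Suc i \<le> av d" for i using d by (intro pow_le_self) auto
  have wp: "av w ^ k \<le> 1" for k using w by (intro power_le_one) auto
  show "av (T1 w d i) \<le> real p * av d" for i
  proof -
    have "av (T1 w d i) \<le> real p * 1 * av d * 1"
      unfolding av_T1 using x wp of_nat_le p2r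
      by (intro mult_mono) (auto simp del: power_Suc of_nat_Suc binomial_Suc_Suc)
    then show ?thesis by simp
  qed
  show "av (T2 w d i) \<le> real p * av d" for i
  proof -
    have "av (T2 w d i) \<le> real p * 1 * av d * 1"
      unfolding av_T2 using x wp of_nat_le p2r
      by (intro mult_mono) (auto simp del: power_Suc of_nat_Suc binomial_Suc_Suc)
    then show ?thesis by simp
  qed
  show "0 \<le> real p * av d" by simp
qed


lemma pow_rho:
  assumes "0 \<le> x" "x \<le> S_rad p" "p \<le> Suc i"
  shows "real p * x ^ Suc i \<le> rho p * x"
proof -
  note sf = S_facts[OF p2]
  have x1: "x \<le> 1" using assms sf by linarith
  have "x ^ Suc i \<le> x ^ p" using assms x1 by (intro power_decreasing) auto
  also have "x ^ p = x * x ^ (p - 1)" using p2 by (metis Suc_diff_1 not_numeral_le_zero not_gr0 power_Suc)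
  also have "\<dots> \<le> x * S_rad p ^ (p - 1)" using assms by (intro mult_left_mono power_mono) auto
  finally have "real p * x ^ Suc i \<le> real p * (x * S_rad p ^ (p - 1))"
    by (rule mult_left_mono) simp
  also have "\<dots> = rho p * x" using sf(2) by (simp add: algebra_simps)
  finally show ?thesis .
qed

lemma P_fine:
  assumes w: "av w \<le> 1" and d: "av d \<le> S_rad p"
    and K1: "av w ^ (p - 1) \<le> K" and K2: "real p * av w ^ p \<le> K" and K3: "rho p \<le> K"
  shows "av (P_lam p l (w + d) - P_lam p l w) \<le> K * av d"
proof (rule P_diff_bound)
  note sf = S_facts[OF p2] and rf = rho_facts[OF p2]
  let ?x = "av d"
  have x0: "?x \<ge> 0" by simp
  have SK: "S_rad p * ?x \<le> K * ?x" using sf K3 by (intro mult_right_mono) auto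
  have RK: "rho p * ?x \<le> K * ?x" using K3 by (intro mult_right_mono) auto
  have wp: "av w ^ k \<le> 1" for k using w by (intro power_le_one) auto
  have gen: "A * X * W \<le> A * X" if "0 \<le> A" "0 \<le> X" "0 \<le> W" "W \<le> 1" for A X W :: real
    using that by (simp add: mult_left_le)
  show "av (T1 w d i) \<le> K * ?x" if i: "i < p" for i
  proof -
    consider "i = 0" | "1 \<le> i" "Suc i < p" | "p \<le> Suc i" using i by linarith
    then show ?thesis
    proof cases
      case 1
      have "av (T1 w d i) = av w ^ (p - 1) * ?x" unfolding av_T1 1 using av_p p2r by simp
      also have "\<dots> \<le> K * ?x" using K1 by (intro mult_right_mono) auto
      finally show ?thesis .
    next
      case 2
      have c: "real p * av (of_nat (p choose Suc i) :: 'a) \<le> 1"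
        using choose_p[of "Suc i"] 2 p2r by (simp add: field_simps del: of_nat_Suc)
      have "av (T1 w d i) \<le> real p * av (of_nat (p choose Suc i) :: 'a) * ?x ^ Suc i"
        unfolding av_T1 by (rule gen) (auto simp: wp)
      also have "\<dots> \<le> 1 * ?x ^ Suc i" using c by (intro mult_right_mono) auto
      also have "\<dots> \<le> S_rad p * ?x" using pow_le_S[of ?x "S_rad p" i] 2 d sf by simp
      finally show ?thesis using SK by linarith
    next
      case 3
      have "av (T1 w d i) \<le> real p * av (of_nat (p choose Suc i) :: 'a) * ?x ^ Suc i"
        unfolding av_T1 by (rule gen) (auto simp: wp)
      also have "\<dots> \<le> real p * 1 * ?x ^ Suc i" using of_nat_le by (intro mult_right_mono mult_left_mono) auto
      also have "\<dots> \<le> rho p * ?x" using pow_rho[of ?x i] d 3 by simp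
      finally show ?thesis using RK by linarith
    qed
  qed
  show "av (T2 w d i) \<le> K * ?x" if i: "i < Suc p" for i
  proof -
    consider "i = 0" | "1 \<le> i" "Suc i < p" | "p \<le> Suc i" using i by linarith
    then show ?thesis
    proof cases
      case 1
      have "av (T2 w d i) = real p * av w ^ p * ?x" unfolding av_T2 1 using av_Sucp by (simp del: of_nat_Suc)
      also have "\<dots> \<le> K * ?x" using K2 by (intro mult_right_mono) auto
      finally show ?thesis .
    next
      case 2
      have c: "real p * av (of_nat (Suc p choose Suc i) :: 'a) \<le> 1"
        using choose_p1[of "Suc i"] 2 p2r by (simp add: field_simps del: of_nat_Suc binomial_Suc_Suc)
      have "av (T2 w d i) \<le> real p * av (of_nat (Suc p choose Suc i) :: 'a) * ?x ^ Suc i"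
        unfolding av_T2 by (rule gen) (auto simp: wp)
      also have "\<dots> \<le> 1 * ?x ^ Suc i" using c by (intro mult_right_mono) auto
      also have "\<dots> \<le> S_rad p * ?x" using pow_le_S[of ?x "S_rad p" i] 2 d sf by simp
      finally show ?thesis using SK by linarith
    next
      case 3
      have "av (T2 w d i) \<le> real p * av (of_nat (Suc p choose Suc i) :: 'a) * ?x ^ Suc i"
        unfolding av_T2 by (rule gen) (auto simp: wp)
      also have "\<dots> \<le> real p * 1 * ?x ^ Suc i" using of_nat_le
        by (intro mult_right_mono mult_left_mono) (auto simp del: of_nat_Suc binomial_Suc_Suc)
      also have "\<dots> \<le> rho p * ?x" using pow_rho[of ?x i] d 3 by simp
      finally show ?thesis using RK by linarith
    qed
  qed
  show "0 \<le> K * ?x" using K3 rf by simp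
qed
end



context setting begin

definition cc :: 'a where "cc = of_nat p - l / of_nat p"
definition Rs :: "'a \<Rightarrow> 'a" where
  "Rs u = (\<Sum>i\<in>{1..<p}. T1 1 u i) + (\<Sum>i\<in>{1..<Suc p}. T2 1 u i)"
definition G :: "'a \<Rightarrow> 'a" where "G u = - (Rs u + Q (1 + u)) / cc"
definition rr :: real where "rr = av (Q 1) / real p"
definition qq :: real where "qq = Nn / real p"

lemma av_cc: "av cc = real p"
proof -
  have "1 / real p < 1" using p2r by simp
  then have "1 / real p < real p" using p2r by linarith
  then have lt: "av (of_nat p :: 'a) < av (l / of_nat p)" by (simp add: av_l av_p)
  have "av (l / of_nat p - of_nat p) = real p"
    using strict_diff[OF lt] av_al by simp
  then show ?thesis unfolding cc_def using commute by metis
qed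
lemma cc0: "cc \<noteq> 0" using av_cc p2 by auto

lemma Nn_rho: "Nn < 1" using Qsmall rho_facts[OF p2] by linarith
lemma qq_facts: "0 \<le> qq" "qq < 1" "rr \<le> qq" "0 \<le> rr" "rr < 1"
proof -
  show "0 \<le> qq" unfolding qq_def using Nn0 by simp
  show q1: "qq < 1" unfolding qq_def using Nn_rho p2r by (simp add: field_simps)
  have "av (Q 1) \<le> Nn" using Q_bound[of 1] rhat1 by simp
  then show rq: "rr \<le> qq" unfolding rr_def qq_def by (simp add: divide_right_mono)
  show "0 \<le> rr" unfolding rr_def by simp
  show "rr < 1" using rq q1 by linarith
qed

lemma P_one: "P_lam p l 1 = 1" unfolding P_lam_def by simp

lemma P_at_one: "P_lam p l (1 + u) = 1 + (cc + 1) * u + Rs u"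
proof -
  have p0': "0 < p" using p2 by simp
  have s1: "(\<Sum>i<p. T1 1 u i) = T1 1 u 0 + (\<Sum>i\<in>{1..<p}. T1 1 u i)"
    using p0' by (simp add: lessThan_atLeast0 sum.atLeast_Suc_lessThan)
  have s2: "(\<Sum>i<Suc p. T2 1 u i) = T2 1 u 0 + (\<Sum>i\<in>{1..<Suc p}. T2 1 u i)"
    by (simp add: lessThan_atLeast0 sum.atLeast_Suc_lessThan del: sum.op_ivl_Suc)
  have t: "T1 1 u 0 + T2 1 u 0 = (cc + 1) * u"
    unfolding T1_def T2_def cc_def using p0 by (simp add: field_simps)
  have "P_lam p l (1 + u) = P_lam p l 1 + ((\<Sum>i<p. T1 1 u i) + (\<Sum>i<Suc p. T2 1 u i))"
    using P_expand[of 1 u] by (simp add: algebra_simps)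
  then show ?thesis unfolding s1 s2 P_one Rs_def using t by (simp add: algebra_simps)
qed

lemma fix_iff: "P_lam p l (1 + u) + Q (1 + u) = 1 + u \<longleftrightarrow> G u = u"
proof -
  have "P_lam p l (1 + u) + Q (1 + u) = 1 + u \<longleftrightarrow> cc * u = - (Rs u + Q (1 + u))"
    unfolding P_at_one eq_iff_diff_eq_0[of _ "1+u"] eq_iff_diff_eq_0[of "cc*u"] by (simp add: algebra_simps)
  also have "\<dots> \<longleftrightarrow> G u = u" unfolding G_def using cc0 by (auto simp: field_simps)
  finally show ?thesis .
qed

lemma Rs_lip:
  assumes "av u \<le> r" "av u' \<le> r" "r \<le> 1"
  shows "av (Rs u - Rs u') \<le> real p * r * av (u - u')"
proof -
  have r0: "0 \<le> r" using assms(1) nonneg[of u] by linarith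
  have gen: "av (c * (u ^ Suc i - u' ^ Suc i)) \<le> real p * r * av (u - u')"
    if c: "av c \<le> real p" and i: "1 \<le> i" for c i
  proof -
    have "av (c * (u ^ Suc i - u' ^ Suc i)) \<le> real p * (av (u - u') * r ^ i)"
      unfolding mult using c pow_diff[OF assms(1,2), of i] by (intro mult_mono) auto
    also have "\<dots> \<le> real p * (av (u - u') * r)"
      using r0 assms(3) i by (intro mult_left_mono power_le_one) (auto intro!: mult_left_mono simp: power_decreasing[of 1 i r, simplified])
    finally show ?thesis by (simp add: algebra_simps)
  qed
  have d1: "T1 1 u i - T1 1 u' i = (l / of_nat p * of_nat (p choose Suc i)) * (u ^ Suc i - u' ^ Suc i)" for i
    by (simp only: T1_def power_one mult_1_right right_diff_distrib)
  have d2: "T2 1 u i - T2 1 u' i = ((1 - l / of_nat p) * of_nat (Suc p choose Suc i)) * (u ^ Suc i - u' ^ Suc i)" for i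
    by (simp only: T2_def power_one mult_1_right right_diff_distrib)
  have c1: "av (l / of_nat p * of_nat (p choose Suc i)) \<le> real p" for i
  proof -
    have "av (l / of_nat p * of_nat (p choose Suc i)) = real p * av (of_nat (p choose Suc i) :: 'a)"
      by (simp add: av_l av_p del: of_nat_Suc)
    then show ?thesis using of_nat_le[of "p choose Suc i"] mult_left_le[of _ "real p"] by simp
  qed
  have c2: "av ((1 - l / of_nat p) * of_nat (Suc p choose Suc i)) \<le> real p" for i
  proof -
    have "av ((1 - l / of_nat p) * of_nat (Suc p choose Suc i)) = real p * av (of_nat (Suc p choose Suc i) :: 'a)"
      by (simp only: mult av_be)
    moreover have "real p * av (of_nat (Suc p choose Suc i) :: 'a) \<le> real p"
      by (rule mult_left_le[OF of_nat_le]) simp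
    ultimately show ?thesis by linarith
  qed
  have "Rs u - Rs u' = (\<Sum>i\<in>{1..<p}. T1 1 u i - T1 1 u' i) + (\<Sum>i\<in>{1..<Suc p}. T2 1 u i - T2 1 u' i)"
    unfolding Rs_def by (simp add: sum_subtractf)
  also have "av \<dots> \<le> real p * r * av (u - u')"
  proof -
    have "av (\<Sum>i\<in>{1..<p}. T1 1 u i - T1 1 u' i) \<le> real p * r * av (u - u')"
    proof (rule sum_le)
      fix i assume "i \<in> {1..<p}"
      then show "av (T1 1 u i - T1 1 u' i) \<le> real p * r * av (u - u')"
        unfolding d1 by (intro gen c1) auto
    qed (use r0 in simp)
    moreover have "av (\<Sum>i\<in>{1..<Suc p}. T2 1 u i - T2 1 u' i) \<le> real p * r * av (u - u')"
    proof (rule sum_le)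
      fix i assume "i \<in> {1..<Suc p}"
      then show "av (T2 1 u i - T2 1 u' i) \<le> real p * r * av (u - u')"
        unfolding d2 by (intro gen c2) auto
    qed (use r0 in simp)
    ultimately show ?thesis using ultra by (meson max.boundedI order_trans)
  qed
  finally show ?thesis .
qed

lemma Rs0: "Rs 0 = 0" unfolding Rs_def T1_def T2_def by simp

lemma av_one_plus: "av u \<le> 1 \<Longrightarrow> av (1 + u) \<le> 1"
  using ultra[of 1 u] by simp

end



context setting begin

lemma G_lip:
  assumes u: "av u \<le> rr" and u': "av u' \<le> rr"
  shows "av (G u - G u') \<le> qq * av (u - u')"
proof -
  note qf = qq_facts
  have u1: "av (1 + u) \<le> rhat" "av (1 + u') \<le> rhat"
    using av_one_plus[of u] av_one_plus[of u'] u u' qf rhat1 by linarith+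
  have e: "G u - G u' = - ((Rs u - Rs u') + (Q (1 + u) - Q (1 + u'))) / cc"
    unfolding G_def using cc0 by (simp add: field_simps)
  have eq: "av (G u - G u') = av ((Rs u - Rs u') + (Q (1 + u) - Q (1 + u'))) / real p"
    unfolding e by (simp only: divide minus av_cc)
  have b1: "av (Rs u - Rs u') \<le> real p * rr * av (u - u')"
    using Rs_lip[OF u u'] qf by simp
  have prr: "real p * rr \<le> Nn"
    unfolding rr_def using p2r Q_bound[of 1] rhat1 by simp
  have b1': "av (Rs u - Rs u') \<le> Nn * av (u - u')"
    using b1 prr by (meson mult_right_mono nonneg order_trans)
  have b2: "av (Q (1 + u) - Q (1 + u')) \<le> Nn * av (u - u')"
    using Q_lip[OF u1] by simp
  have "av ((Rs u - Rs u') + (Q (1 + u) - Q (1 + u'))) \<le> Nn * av (u - u')"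
    using ultra[of "Rs u - Rs u'" "Q (1 + u) - Q (1 + u')"] b1' b2 by linarith
  then have "av (G u - G u') \<le> Nn * av (u - u') / real p"
    unfolding eq using p2r by (simp add: divide_right_mono)
  then show ?thesis unfolding qq_def by (simp add: field_simps)
qed

lemma G_ball:
  assumes u: "av u \<le> rr"
  shows "av (G u) \<le> rr"
proof -
  note qf = qq_facts
  have u1: "av (1 + u) \<le> rhat" "av (1::'a) \<le> rhat"
    using av_one_plus[of u] u qf rhat1 by auto
  have prr: "real p * rr = av (Q 1)" unfolding rr_def using p2r by simp
  have "av (Rs u) \<le> real p * rr * av u"
    using Rs_lip[OF u _, of 0] qf by (simp add: Rs0)
  also have "\<dots> \<le> real p * rr * 1"
    using u qf p2r by (intro mult_left_mono) auto
  finally have b1: "av (Rs u) \<le> real p * rr" by simp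
  have "av (Q (1 + u) - Q 1) \<le> Nn * av u" using Q_lip[OF u1] by simp
  also have "\<dots> \<le> 1 * rr" using Nn_rho Nn0 u by (intro mult_mono) auto
  also have "\<dots> \<le> real p * rr" using p2r qf by (intro mult_right_mono) auto
  finally have b2: "av (Q (1 + u) - Q 1) \<le> real p * rr" .
  have "Rs u + Q (1 + u) = Rs u + (Q 1 + (Q (1 + u) - Q 1))" by simp
  moreover have b3: "av (Q 1 + (Q (1 + u) - Q 1)) \<le> real p * rr"
    by (rule order_trans[OF ultra max.boundedI]) (use b2 prr in auto)
  ultimately have "av (Rs u + Q (1 + u)) \<le> real p * rr"
    using order_trans[OF ultra[of "Rs u" "Q 1 + (Q (1 + u) - Q 1)"] max.boundedI[OF b1 b3]] by simp
  moreover have "av (G u) = av (Rs u + Q (1 + u)) / real p"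
    unfolding G_def by (simp only: divide minus av_cc)
  ultimately have "av (G u) \<le> real p * rr / real p"
    using p2r divide_right_mono[of "av (Rs u + Q (1 + u))" "real p * rr" "real p"] by simp
  then show ?thesis using p2r by simp
qed

definition useq :: "nat \<Rightarrow> 'a" where "useq n = (G ^^ n) 0"

lemma useq_ball: "av (useq n) \<le> rr"
  unfolding useq_def by (induction n) (auto simp: G_ball qq_facts)

lemma useq_step: "av (useq (Suc n) - useq n) \<le> qq ^ n * rr"
proof (induction n)
  case 0 then show ?case unfolding useq_def using G_ball[of 0] qq_facts by simp
next
  case (Suc n)
  have "av (useq (Suc (Suc n)) - useq (Suc n)) = av (G (useq (Suc n)) - G (useq n))"
    unfolding useq_def by simp
  also have "\<dots> \<le> qq * av (useq (Suc n) - useq n)" by (rule G_lip[OF useq_ball useq_ball])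
  also have "\<dots> \<le> qq * (qq ^ n * rr)" using Suc qq_facts by (intro mult_left_mono) auto
  finally show ?case by simp
qed

lemma useq_cauchy_bound: "n \<le> m \<Longrightarrow> av (useq m - useq n) \<le> qq ^ n * rr"
proof (induction m rule: dec_induct)
  case base then show ?case using qq_facts by simp
next
  case (step m)
  have "qq ^ m * rr \<le> qq ^ n * rr"
    using step qq_facts by (intro mult_right_mono power_decreasing) auto
  then show ?case using tri[of "useq (Suc m)" "useq n" "useq m"] useq_step[of m] step by linarith
qed

lemma fixpoint_exists: "\<exists>L. av L \<le> rr \<and> G L = L"
proof -
  have cau: "v_cauchy av useq" unfolding v_cauchy_def
  proof (intro allI impI)
    fix e :: real assume e: "e > 0"
    have "(\<lambda>n. qq ^ n * rr) \<longlonglongrightarrow> 0 * rr"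
      using qq_facts by (intro tendsto_mult LIMSEQ_power_zero) auto
    then obtain N where N: "\<And>n. n \<ge> N \<Longrightarrow> \<bar>qq ^ n * rr\<bar> < e"
      using e unfolding LIMSEQ_iff by auto
    show "\<exists>N. \<forall>m\<ge>N. \<forall>n\<ge>N. av (useq m - useq n) < e"
    proof (intro exI allI impI)
      fix m n assume mn: "N \<le> m" "N \<le> n"
      show "av (useq m - useq n) < e"
      proof (cases "n \<le> m")
        case True then show ?thesis using useq_cauchy_bound[of n m] N[of n] mn by linarith
      next
        case False then show ?thesis using useq_cauchy_bound[of m n] N[of m] mn commute[of "useq m" "useq n"] by linarith
      qed
    qed
  qed
  obtain L where L: "v_lim av useq L" using complete[OF cau] by blast
  have "av (L - 0) \<le> rr" by (rule vlim_le[OF L vlim_const]) (use useq_ball in simp)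
  then have Lb: "av L \<le> rr" by simp
  have l1: "v_lim av (\<lambda>n. useq (Suc n)) L"
    using L unfolding v_lim_def by (rule LIMSEQ_Suc)
  have l2: "v_lim av (\<lambda>n. useq (Suc n)) (G L)"
    unfolding v_lim_def
  proof (rule tendsto_sandwich[of "\<lambda>n. 0" _ _ "\<lambda>n. qq * av (useq n - L)"])
    show "\<forall>\<^sub>F n in sequentially. 0 \<le> av (useq (Suc n) - G L)" by simp
    show "\<forall>\<^sub>F n in sequentially. av (useq (Suc n) - G L) \<le> qq * av (useq n - L)"
      using G_lip[OF useq_ball Lb] unfolding useq_def by simp
    show "(\<lambda>n. 0) \<longlonglongrightarrow> (0::real)" by simp
    have "(\<lambda>n. qq * av (useq n - L)) \<longlonglongrightarrow> qq * 0"
      using L unfolding v_lim_def by (intro tendsto_mult) auto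
    then show "(\<lambda>n. qq * av (useq n - L)) \<longlonglongrightarrow> 0" by simp
  qed
  show ?thesis using vlim_unique[OF l1 l2] Lb by auto
qed

lemma fixpoint_unique: "av u \<le> rr \<Longrightarrow> G u = u \<Longrightarrow> av u' \<le> rr \<Longrightarrow> G u' = u' \<Longrightarrow> u = u'"
proof -
  assume a: "av u \<le> rr" "G u = u" "av u' \<le> rr" "G u' = u'"
  have "av (u - u') \<le> qq * av (u - u')" using G_lip[OF a(1) a(3)] a by simp
  then have "(1 - qq) * av (u - u') \<le> 0" by (simp add: algebra_simps)
  then have "av (u - u') \<le> 0" using qq_facts by (simp add: mult_le_0_iff)
  then have "av (u - u') = 0" using nonneg[of "u - u'"] by linarith
  then show ?thesis by simp
qed

abbreviation "hh \<equiv> h_fix av p a l"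

lemma h_props: "av (hh - 1) \<le> rr"
proof -
  obtain L where L: "av L \<le> rr" "G L = L" using fixpoint_exists by blast
  have "hh = 1 + L" unfolding h_fix_def
  proof (rule the_equality)
    show "av (1 + L - 1) \<le> av (ps_eval av a 1) / real p \<and> P_lam p l (1 + L) + ps_eval av a (1 + L) = 1 + L"
      using L fix_iff[of L] unfolding rr_def by simp
    fix z assume z: "av (z - 1) \<le> av (ps_eval av a 1) / real p \<and> P_lam p l z + ps_eval av a z = z"
    then have "G (z - 1) = z - 1" using fix_iff[of "z - 1"] by simp
    then have "z - 1 = L" using fixpoint_unique[of "z - 1" L] z L unfolding rr_def by simp
    then show "z = 1 + L" by (simp add: algebra_simps)
  qed
  then show ?thesis using L by simp
qed

lemma h_small: "av (hh - 1) \<le> Nn" "av (hh - 1) < rho p" "av (hh - 1) < 1"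
proof -
  have "rr \<le> qq" using qq_facts by simp
  moreover have "qq \<le> Nn"
  proof -
    have "Nn * 1 \<le> Nn * real p" by (rule mult_left_mono) (use p2r Nn0 in auto)
    then show ?thesis unfolding qq_def using p2r by (simp add: divide_le_eq)
  qed
  ultimately show h1: "av (hh - 1) \<le> Nn" using h_props by linarith
  then show "av (hh - 1) < rho p" using Qsmall by linarith
  then show "av (hh - 1) < 1" using rho_facts[OF p2] by linarith
qed

end



declare rho_seq.simps(2)[simp del]

context setting begin

abbreviation "ff \<equiv> Q_lam av p a l"

lemma ff_eq: "ff z = P_lam p l (z + hh - 1) + Q (z + hh - 1) + 1 - hh"
  unfolding Q_lam_def Let_def by simp

lemma ff_diff: "ff y - ff x = (P_lam p l ((x + hh - 1) + (y - x)) - P_lam p l (x + hh - 1))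
   + (Q ((x + hh - 1) + (y - x)) - Q (x + hh - 1))"
  unfolding ff_eq by (simp add: algebra_simps)

lemma rho_seq_le: "rho_seq p (Suc j) ^ (p - 1) \<le> rho_seq p j"
proof -
  note rs = rho_seq_facts[OF p2] and rf = rho_facts[OF p2]
  have "rho_seq p j = real p * rho_seq p (Suc j) ^ p" using rho_seq_pow[OF p2] by simp
  also have "\<dots> = (real p * rho_seq p (Suc j)) * rho_seq p (Suc j) ^ (p - 1)"
    using p2 by (metis (no_types, lifting) Suc_diff_1 mult.assoc not_numeral_le_zero not_gr0 power_Suc)
  finally have e: "rho_seq p j = (real p * rho_seq p (Suc j)) * rho_seq p (Suc j) ^ (p - 1)" .
  have "1 \<le> real p * rho p" using rf p2r by (simp add: field_simps)
  also have "\<dots> \<le> real p * rho_seq p (Suc j)" using rs[of "Suc j"] by (intro mult_left_mono) auto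
  moreover have "0 \<le> rho_seq p (Suc j) ^ (p - 1)" using rs[of "Suc j"] by simp
  ultimately have "1 * rho_seq p (Suc j) ^ (p - 1) \<le> (real p * rho_seq p (Suc j)) * rho_seq p (Suc j) ^ (p - 1)"
    by (intro mult_right_mono) auto
  then show ?thesis using e by simp
qed

lemma w_small: "av x \<le> r \<Longrightarrow> rho p \<le> r \<Longrightarrow> av (x + hh - 1) \<le> r"
proof -
  assume "av x \<le> r" "rho p \<le> r"
  then show ?thesis using ultra[of x "hh - 1"] h_small by (simp add: add_diff_eq[symmetric])
qed

lemma ff_lip1:
  assumes x: "av x \<le> 1" and y: "av y \<le> 1"
  shows "av (ff y - ff x) \<le> real p * av (y - x)"
proof -
  have rf: "rho p < 1" using rho_facts[OF p2] by simp
  have w: "av (x + hh - 1) \<le> 1" using w_small[OF x] rf by simp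
  have w': "av ((x + hh - 1) + (y - x)) \<le> 1" using w_small[OF y] rf by (simp add: algebra_simps)
  have d: "av (y - x) \<le> 1" using ultra_diff[of y x] x y by simp
  have b1: "av (P_lam p l ((x + hh - 1) + (y - x)) - P_lam p l (x + hh - 1)) \<le> real p * av (y - x)"
    by (rule P_lip1[OF w d])
  have "av (Q ((x + hh - 1) + (y - x)) - Q (x + hh - 1)) \<le> Nn * av ((x + hh - 1) + (y - x) - (x + hh - 1))"
    by (rule Q_lip) (use w w' rhat1 in auto)
  also have "\<dots> = Nn * av (y - x)" by simp
  also have "\<dots> \<le> real p * av (y - x)" using Nn_rho p2r by (intro mult_right_mono) auto
  finally have b2: "av (Q ((x + hh - 1) + (y - x)) - Q (x + hh - 1)) \<le> real p * av (y - x)" .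
  show ?thesis unfolding ff_diff using ultra b1 b2 by (meson max.boundedI order_trans)
qed

lemma ff_fine:
  assumes x: "av x \<le> rho_seq p (Suc j)" and d: "av (y - x) \<le> S_rad p"
  shows "av (ff y - ff x) \<le> rho_seq p j * av (y - x)"
proof -
  note rs = rho_seq_facts[OF p2] and rf = rho_facts[OF p2] and sf = S_facts[OF p2]
  let ?r = "rho_seq p (Suc j)"
  let ?w = "x + hh - 1"
  have w: "av ?w \<le> ?r" using w_small[OF x] rs[of "Suc j"] by simp
  have w1: "av ?w \<le> 1" using w rs[of "Suc j"] by linarith
  have K1: "av ?w ^ (p - 1) \<le> rho_seq p j"
    using power_mono[OF w, of "p - 1"] rho_seq_le[of j] by simp
  have K2: "real p * av ?w ^ p \<le> rho_seq p j"
    using power_mono[OF w, of p] rho_seq_pow[OF p2, of j] p2r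
    by (metis mult_left_mono nonneg of_nat_0_le_iff)
  have K3: "rho p \<le> rho_seq p j" using rs by simp
  have b1: "av (P_lam p l (?w + (y - x)) - P_lam p l ?w) \<le> rho_seq p j * av (y - x)"
    by (rule P_fine[OF w1 d K1 K2 K3])
  have w': "av (?w + (y - x)) \<le> 1"
    using ultra[of ?w "y - x"] w1 d sf by simp
  have "av (Q (?w + (y - x)) - Q ?w) \<le> Nn * av (?w + (y - x) - ?w)"
    by (rule Q_lip) (use w1 w' rhat1 in auto)
  also have "\<dots> = Nn * av (y - x)" by simp
  also have "\<dots> \<le> rho_seq p j * av (y - x)"
    using Qsmall K3 by (intro mult_right_mono) auto
  finally have b2: "av (Q (?w + (y - x)) - Q ?w) \<le> rho_seq p j * av (y - x)" .
  show ?thesis unfolding ff_diff using ultra b1 b2 by (meson max.boundedI order_trans)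
qed

lemma P_abs:
  assumes w: "av w < 1"
  shows "av (P_lam p l w) = real p * av w ^ p"
proof -
  have e: "P_lam p l w = w ^ p * (l / of_nat p + (1 - l / of_nat p) * w)"
    unfolding P_lam_def by (simp add: algebra_simps)
  have "av ((1 - l / of_nat p) * w) < av (l / of_nat p)"
    using av_be av_al w p2r by simp
  then have "av (l / of_nat p + (1 - l / of_nat p) * w) = real p"
    using strict av_al by simp
  then show ?thesis unfolding e by simp
qed

lemma ff_back:
  assumes x: "av x < 1" and fx: "av (ff x) \<le> rho_seq p j"
  shows "av x \<le> rho_seq p (Suc j)"
proof -
  note rs = rho_seq_facts[OF p2] and rf = rho_facts[OF p2]
  let ?w = "x + hh - 1"
  have w: "av ?w < 1"
  proof -
    have "av ?w \<le> max (av x) (av (hh - 1))" using ultra[of x "hh - 1"] by (simp add: add_diff_eq[symmetric])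
    then show ?thesis using x h_small by simp
  qed
  have rest: "av (Q ?w + (1 - hh)) \<le> Nn"
  proof -
    have "av (Q ?w) \<le> Nn" using Q_bound[of ?w] w rhat1 by simp
    moreover have "av (1 - hh) \<le> Nn" using h_small commute[of 1 hh] by simp
    ultimately show ?thesis using ultra[of "Q ?w" "1 - hh"] by simp
  qed
  have fe: "ff x = P_lam p l ?w + (Q ?w + (1 - hh))" unfolding ff_eq by (simp add: algebra_simps)
  have le: "real p * av ?w ^ p \<le> rho_seq p j"
  proof (rule ccontr)
    assume "\<not> ?thesis"
    then have gt: "av (P_lam p l ?w) > rho_seq p j" using P_abs[OF w] by simp
    moreover have "av (Q ?w + (1 - hh)) < av (P_lam p l ?w)"
      using rest Qsmall rs[of j] gt by linarith
    ultimately have "av (ff x) > rho_seq p j" unfolding fe using strict[of "Q ?w + (1 - hh)" "P_lam p l ?w"] by simp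
    then show False using fx by simp
  qed
  then have "real p * av ?w ^ p \<le> real p * rho_seq p (Suc j) ^ p"
    using rho_seq_pow[OF p2, of j] by simp
  then have "av ?w ^ p \<le> rho_seq p (Suc j) ^ p"
    using p2r by (simp add: mult_le_cancel_left_pos)
  then have wb: "av ?w \<le> rho_seq p (Suc j)"
  proof -
    obtain k where k: "p = Suc k" using p2 by (cases p) auto
    show ?thesis by (rule power_le_imp_le_base[of _ k]) (use \<open>av ?w ^ p \<le> _\<close> k rs[of "Suc j"] in auto)
  qed
  have "av (?w - (hh - 1)) \<le> max (av ?w) (av (hh - 1))" by (rule ultra_diff)
  moreover have "?w - (hh - 1) = x" by simp
  ultimately have "av x \<le> max (av ?w) (av (hh - 1))" by simp
  then show ?thesis using wb h_small rs[of "Suc j"] unfolding le_max_iff_disj by linarith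
qed

end



lemma blk_mono: "i \<le> i' \<Longrightarrow> blk_start m M i \<le> blk_start m M i'"
  by (induction i' rule: dec_induct) auto

lemma blk_ge: "(\<forall>i. m i > 0) \<Longrightarrow> blk_start m M i \<ge> i"
proof (induction i)
  case (Suc i)
  then have "0 < m i" "i \<le> blk_start m M i" by auto
  then show ?case by simp
qed simp

lemma itin0: "t < m i \<Longrightarrow> itin m M (blk_start m M i + t) = 0"
  unfolding itin_def by (intro if_P exI[of _ i]) simp

lemma itin1:
  assumes t: "t < M i"
  shows "itin m M (blk_start m M i + m i + t) = 1"
proof -
  let ?n = "blk_start m M i + m i + t"
  have "\<not> (blk_start m M i' \<le> ?n \<and> ?n < blk_start m M i' + m i')" for i'
  proof (cases "i' \<le> i")
    case True
    show ?thesis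
    proof (cases "i' = i")
      case False
      then have "Suc i' \<le> i" using True by simp
      then have "blk_start m M (Suc i') \<le> blk_start m M i" by (rule blk_mono)
      then show ?thesis by auto
    qed simp
  next
    case False
    then have "Suc i \<le> i'" by simp
    then have "blk_start m M (Suc i) \<le> blk_start m M i'" by (rule blk_mono)
    then show ?thesis using t by auto
  qed
  then show ?thesis unfolding itin_def by (intro if_not_P) blast
qed

lemma itin_01: "itin m M n = 0 \<or> itin m M n = 1"
  unfolding itin_def by auto

lemma no_period:
  assumes pos: "\<forall>i. m i > 0 \<and> M i > 0" and lim: "filterlim M at_top sequentially"
    and e: "e > 0" and per: "\<forall>j\<ge>N. itin m M j = itin m M (j + e)"
  shows False
proof -
  have "eventually (\<lambda>i. e \<le> M i) sequentially" using lim unfolding filterlim_at_top by blast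
  then obtain I where I: "\<And>i. i \<ge> I \<Longrightarrow> e \<le> M i" unfolding eventually_sequentially by blast
  let ?i = "max I N"
  have Me: "e \<le> M ?i" using I by simp
  have "blk_start m M ?i \<ge> ?i" using blk_ge[where m=m and M=M and i="?i"] pos by blast
  then have sN: "blk_start m M ?i \<ge> N" by simp
  let ?j = "blk_start m M ?i + m ?i + (M ?i - e)"
  have "itin m M ?j = 1" using itin1[where t="M ?i - e" and i="?i" and M=M and m=m] e Me by simp
  moreover have "?j + e = blk_start m M (Suc ?i) + 0" using Me by simp
  then have "itin m M (?j + e) = 0" using itin0[where t=0 and m=m and i="Suc ?i" and M=M] pos by simp
  moreover have "?j \<ge> N" using sN by simp
  ultimately show False using per[rule_format, of ?j] by simp
qed

locale dyn = setting +
  fixes m M :: "nat \<Rightarrow> nat" and z0 :: 'a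
  assumes pos: "\<forall>i. m i > 0 \<and> M i > 0"
    and prodle: "\<forall>i. (\<Prod>k\<in>{1..<m i}. rho_seq p k) * real p ^ M i \<le> 1"
    and itinerary: "\<forall>n. (itin m M n = 0 \<longrightarrow> av ((ff ^^ n) z0) < 1)
                       \<and> (itin m M n = 1 \<longrightarrow> av ((ff ^^ n) z0 - 1) < 1)"
begin

abbreviation "xx n \<equiv> (ff ^^ n) z0"
abbreviation "sb \<equiv> blk_start m M"

lemma x_Suc: "xx (Suc n) = ff (xx n)" by simp

lemma x0: "itin m M n = 0 \<Longrightarrow> av (xx n) < 1" using itinerary by blast
lemma x1: "itin m M n = 1 \<Longrightarrow> av (xx n) = 1"
proof -
  assume "itin m M n = 1"
  then have "av (xx n - 1) < 1" using itinerary by blast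
  then have "av (1 + (xx n - 1)) = 1" using strict[of "xx n - 1" 1] by simp
  then show ?thesis by simp
qed
lemma x_le1: "av (xx n) \<le> 1"
proof (cases "itin m M n = 0")
  case True then show ?thesis using x0[of n] by simp
next
  case False then show ?thesis using x1[of n] itin_01[of m M n] by simp
qed

lemma itin_eq: "av (xx i - xx j) < 1 \<Longrightarrow> itin m M i = itin m M j"
proof (rule ccontr)
  assume a: "av (xx i - xx j) < 1" "itin m M i \<noteq> itin m M j"
  have "av (xx i - xx j) = 1"
  proof (cases "itin m M i = 0")
    case True
    then have "itin m M j = 1" using a itin_01 by metis
    then have "av (xx i) < av (xx j)" "av (xx j) = 1" using x0[OF True] x1 by auto
    then show ?thesis using strict_diff[of "xx i" "xx j"] commute[of "xx i" "xx j"] by simp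
  next
    case False
    then have i1: "itin m M i = 1" using itin_01 by metis
    then have "itin m M j = 0" using a itin_01 by metis
    then have "av (xx j) < av (xx i)" "av (xx i) = 1" using x0 x1[OF i1] by auto
    then show ?thesis using strict_diff[of "xx j" "xx i"] by simp
  qed
  then show False using a by simp
qed

lemma blk_back:
  assumes t: "t < m i"
  shows "av (xx (sb i + m i - Suc t)) \<le> rho_seq p (Suc t)"
  using t
proof (induction t)
  case 0
  have i0: "itin m M (sb i + (m i - 1)) = 0" using itin0[of "m i - 1" m i M] pos by simp
  have "sb i + m i - Suc 0 = sb i + (m i - 1)" using pos by (simp add: Suc_le_eq)
  moreover have "Suc (sb i + (m i - 1)) = sb i + m i + 0" using pos by (simp add: Suc_le_eq)
  ultimately show ?case using ff_back[of "xx (sb i + (m i - 1))" 0] x0[OF i0] x_le1[of "sb i + m i"]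
    by (simp del: funpow.simps add: x_Suc[symmetric] del: x_Suc)
next
  case (Suc t)
  let ?n = "sb i + m i - Suc (Suc t)"
  have n: "?n = sb i + (m i - Suc (Suc t))" using Suc by simp
  have i0: "itin m M ?n = 0" unfolding n using itin0[of "m i - Suc (Suc t)" m i M] Suc by simp
  have eq: "Suc ?n = sb i + m i - Suc t" using Suc by simp
  have "av (xx (sb i + m i - Suc t)) \<le> rho_seq p (Suc t)" using Suc by simp
  then have "av (xx (Suc ?n)) \<le> rho_seq p (Suc t)" by (simp only: eq)
  then have "av (ff (xx ?n)) \<le> rho_seq p (Suc t)" by simp
  then show ?case using ff_back[of "xx ?n" "Suc t"] x0[OF i0] by simp
qed


lemma block_track:
  assumes d0: "av ((ff ^^ sb i) z - xx (sb i)) \<le> S_rad p"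
  shows "\<forall>t \<le> m i + M i. av ((ff ^^ (sb i + t)) z - xx (sb i + t)) \<le> S_rad p"
proof -
  note sf = S_facts[OF p2] and rs = rho_seq_facts[OF p2]
  define D where "D t = av ((ff ^^ (sb i + t)) z - xx (sb i + t))" for t
  have D0: "D 0 \<le> S_rad p" using d0 unfolding D_def by simp
  have DS: "D (Suc t) = av (ff ((ff ^^ (sb i + t)) z) - ff (xx (sb i + t)))" for t
    unfolding D_def by simp
  have Dnn: "D t \<ge> 0" for t unfolding D_def by simp
  define pr where "pr t = (\<Prod>k\<in>{m i - t..<m i}. rho_seq p k)" for t
  have rs0: "0 \<le> rho_seq p k" "rho_seq p k \<le> 1" for k using rs[of k] by auto
  have pr01: "0 \<le> pr t \<and> pr t \<le> 1" for t
    unfolding pr_def by (intro conjI prod_nonneg prod_le_1) (auto simp: rs0)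
  have A: "D t \<le> D 0 * pr t" if "t \<le> m i" for t
    using that
  proof (induction t)
    case 0 then show ?case unfolding pr_def by simp
  next
    case (Suc t)
    then have t: "t < m i" by simp
    have Dt: "D t \<le> D 0 * pr t" using Suc by simp
    have DtS: "D t \<le> S_rad p"
      using Dt pr01[of t] D0 Dnn[of 0] mult_left_le[of "pr t" "D 0"] by linarith
    have e1: "sb i + t = sb i + m i - Suc (m i - Suc t)" using t by simp
    have xb: "av (xx (sb i + t)) \<le> rho_seq p (Suc (m i - Suc t))"
      using blk_back[of "m i - Suc t" i] t unfolding e1[symmetric] by simp
    have step: "D (Suc t) \<le> rho_seq p (m i - Suc t) * D t"
      unfolding DS using ff_fine[OF xb, of "(ff ^^ (sb i + t)) z"] DtS unfolding D_def by simp
    have set: "{m i - Suc t..<m i} = insert (m i - Suc t) {m i - t..<m i}"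
    proof (rule set_eqI)
      fix x show "x \<in> {m i - Suc t..<m i} \<longleftrightarrow> x \<in> insert (m i - Suc t) {m i - t..<m i}"
        using t by simp arith
    qed
    have pr_s: "pr (Suc t) = rho_seq p (m i - Suc t) * pr t"
      unfolding pr_def set using t by (subst prod.insert) auto
    have "D (Suc t) \<le> rho_seq p (m i - Suc t) * (D 0 * pr t)"
    proof -
      have "rho_seq p (m i - Suc t) * D t \<le> rho_seq p (m i - Suc t) * (D 0 * pr t)"
        using Dt rs0 by (intro mult_left_mono) auto
      then show ?thesis using step by linarith
    qed
    then show ?case unfolding pr_s by (simp add: algebra_simps)
  qed
  define P1 where "P1 = (\<Prod>k\<in>{1..<m i}. rho_seq p k)"
  have P1nn: "P1 \<ge> 0" unfolding P1_def by (intro prod_nonneg) (auto simp: rs0)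
  have prm: "pr (m i) = P1"
  proof -
    have "pr (m i) = (\<Prod>k\<in>{0..<m i}. rho_seq p k)" unfolding pr_def by simp
    also have "\<dots> = rho_seq p 0 * P1" unfolding P1_def using pos by (subst prod.atLeast_Suc_lessThan) auto
    finally show ?thesis by simp
  qed
  have PM: "P1 * real p ^ M i \<le> 1" using prodle unfolding P1_def by blast
  have Pt: "P1 * real p ^ t \<le> 1" if "t \<le> M i" for t
  proof -
    have "P1 * real p ^ t \<le> P1 * real p ^ M i"
      using that P1nn p2r by (intro mult_left_mono power_increasing) auto
    then show ?thesis using PM by linarith
  qed
  have B: "D (m i + t) \<le> D 0 * (P1 * real p ^ t)" if "t \<le> M i" for t
    using that
  proof (induction t)
    case 0 then show ?case using A[of "m i"] prm by simp
  next
    case (Suc t)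
    then have t: "t \<le> M i" by simp
    have Dt: "D (m i + t) \<le> D 0 * (P1 * real p ^ t)" using Suc by simp
    have "D 0 * (P1 * real p ^ t) \<le> D 0 * 1" using Pt[OF t] Dnn[of 0] by (intro mult_left_mono) auto
    then have DtS: "D (m i + t) \<le> S_rad p" using Dt D0 by linarith
    have y1: "av ((ff ^^ (sb i + (m i + t))) z) \<le> 1"
    proof -
      have "av ((ff ^^ (sb i + (m i + t))) z) \<le> max (av ((ff ^^ (sb i + (m i + t))) z - xx (sb i + (m i + t)))) (av (xx (sb i + (m i + t))))"
        using ultra[of "(ff ^^ (sb i + (m i + t))) z - xx (sb i + (m i + t))" "xx (sb i + (m i + t))"] by simp
      then show ?thesis using DtS sf x_le1[of "sb i + (m i + t)"] unfolding D_def by simp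
    qed
    have "D (m i + Suc t) \<le> real p * D (m i + t)"
      using DS[of "m i + t"] ff_lip1[OF x_le1 y1] unfolding D_def by simp
    also have "\<dots> \<le> real p * (D 0 * (P1 * real p ^ t))" using Dt by (intro mult_left_mono) auto
    finally show ?case by (simp add: algebra_simps)
  qed
  show ?thesis
  proof (intro allI impI)
    fix t assume t: "t \<le> m i + M i"
    have "D t \<le> S_rad p"
    proof (cases "t \<le> m i")
      case True
      then have "D t \<le> D 0 * pr t" by (rule A)
      also have "\<dots> \<le> D 0 * 1" using pr01[of t] Dnn[of 0] by (intro mult_left_mono) auto
      finally show ?thesis using D0 by simp
    next
      case False
      define t' where "t' = t - m i"
      have t': "t = m i + t'" "t' \<le> M i" using t False unfolding t'_def by arith+
      have "D t \<le> D 0 * (P1 * real p ^ t')" unfolding t' by (rule B[OF t'(2)])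
      also have "\<dots> \<le> D 0 * 1" using Pt[OF t'(2)] Dnn[of 0] by (intro mult_left_mono) auto
      finally show ?thesis using D0 by simp
    qed
    then show "av ((ff ^^ (sb i + t)) z - xx (sb i + t)) \<le> S_rad p" unfolding D_def .
  qed
qed

lemma track_all:
  assumes z: "av (z - z0) \<le> S_rad p"
  shows "av ((ff ^^ n) z - xx n) \<le> S_rad p"
proof -
  have claim: "av ((ff ^^ sb i) z - xx (sb i)) \<le> S_rad p \<and> (\<forall>n < sb i. av ((ff ^^ n) z - xx n) \<le> S_rad p)" for i
  proof (induction i)
    case 0 then show ?case using z by simp
  next
    case (Suc i)
    have bt: "\<forall>t \<le> m i + M i. av ((ff ^^ (sb i + t)) z - xx (sb i + t)) \<le> S_rad p"
      using block_track Suc by blast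
    have e: "sb (Suc i) = sb i + (m i + M i)" by simp
    have "av ((ff ^^ sb (Suc i)) z - xx (sb (Suc i))) \<le> S_rad p" unfolding e using bt by simp
    moreover have "\<forall>n < sb (Suc i). av ((ff ^^ n) z - xx n) \<le> S_rad p"
    proof (intro allI impI)
      fix n assume n: "n < sb (Suc i)"
      show "av ((ff ^^ n) z - xx n) \<le> S_rad p"
      proof (cases "n < sb i")
        case True then show ?thesis using Suc by blast
      next
        case False
        define t where "t = n - sb i"
        have "n = sb i + t" "t \<le> m i + M i" using n e False unfolding t_def by arith+
        then show ?thesis using bt by simp
      qed
    qed
    ultimately show ?case by blast
  qed
  have "n < sb (Suc n)" using blk_ge[where m=m and M=M and i="Suc n"] pos by auto
  then show ?thesis using claim[of "Suc n"] by blast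
qed

lemma orbit_le1:
  assumes z: "av (z - z0) \<le> S_rad p"
  shows "av ((ff ^^ n) z) \<le> 1"
proof -
  have "av ((ff ^^ n) z) \<le> max (av ((ff ^^ n) z - xx n)) (av (xx n))"
    using ultra[of "(ff ^^ n) z - xx n" "xx n"] by simp
  then show ?thesis using track_all[OF z, of n] S_facts[OF p2] x_le1[of n] by simp
qed
end



context dyn begin

lemma D_sub_K: "{z. av (z - z0) \<le> S_rad p} \<subseteq> K_set av rhat ff"
  unfolding K_set_def using orbit_le1 rhat1 by (auto intro: order_trans[OF _ less_imp_le])

lemma close_itin:
  assumes "av (xx j - Y) \<le> S_rad p" "av (Y - xx j') \<le> S_rad p"
  shows "itin m M j = itin m M j'"
proof (rule itin_eq)
  have "av (xx j - xx j') \<le> max (av (xx j - Y)) (av (Y - xx j'))" by (rule tri)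
  then show "av (xx j - xx j') < 1" using assms S_facts[OF p2] by simp
qed

lemma wl:
  assumes lim: "filterlim M at_top sequentially" and nk: "n < k"
    and y1: "av (y1 - z0) \<le> S_rad p" and y2: "av (y2 - z0) \<le> S_rad p"
    and eq: "(ff ^^ n) y1 = (ff ^^ k) y2"
  shows False
proof -
  have per: "\<forall>j\<ge>n. itin m M j = itin m M (j + (k - n))"
  proof (intro allI impI)
    fix j assume j: "n \<le> j"
    define t where "t = j - n"
    have jt: "j = t + n" "j + (k - n) = t + k" using j nk unfolding t_def by arith+
    have "(ff ^^ (t + n)) y1 = (ff ^^ (t + k)) y2" by (simp add: funpow_add eq)
    then have c: "(ff ^^ j) y1 = (ff ^^ (j + (k - n))) y2" using jt by simp
    show "itin m M j = itin m M (j + (k - n))"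
    proof (rule close_itin[of j "(ff ^^ j) y1"])
      show "av (xx j - (ff ^^ j) y1) \<le> S_rad p" using track_all[OF y1, of j] commute by metis
      show "av ((ff ^^ j) y1 - xx (j + (k - n))) \<le> S_rad p" unfolding c using track_all[OF y2] by simp
    qed
  qed
  show False by (rule no_period[OF pos lim _ per]) (use nk in simp)
qed

lemma wandering:
  assumes lim: "filterlim M at_top sequentially"
  shows "wandering_disc ff {z. av (z - z0) \<le> S_rad p}"
  unfolding wandering_disc_def
proof (intro allI impI)
  fix n k assume ne: "(ff ^^ n) ` {z. av (z - z0) \<le> S_rad p} \<inter> (ff ^^ k) ` {z. av (z - z0) \<le> S_rad p} \<noteq> {}"
  then obtain y1 y2 where y: "av (y1 - z0) \<le> S_rad p" "av (y2 - z0) \<le> S_rad p" "(ff ^^ n) y1 = (ff ^^ k) y2"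
    by auto
  show "n = k"
  proof (rule ccontr)
    assume "n \<noteq> k"
    then consider "n < k" | "k < n" by linarith
    then show False
    proof cases
      case 1 show False using wl[OF lim 1 y(1,2,3)] by blast
    next
      case 2 show False using wl[OF lim 2 y(2,1) y(3)[symmetric]] by blast
    qed
  qed
qed

lemma iter_lip:
  assumes z: "av (z - z0) \<le> S_rad p"
  shows "av ((ff ^^ (i + t)) z - (ff ^^ (j + t)) z) \<le> real p ^ t * av ((ff ^^ i) z - (ff ^^ j) z)"
proof (induction t)
  case 0 then show ?case by simp
next
  case (Suc t)
  have "av ((ff ^^ (i + Suc t)) z - (ff ^^ (j + Suc t)) z)
      = av (ff ((ff ^^ (i + t)) z) - ff ((ff ^^ (j + t)) z))" by simp
  also have "\<dots> \<le> real p * av ((ff ^^ (i + t)) z - (ff ^^ (j + t)) z)"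
    using ff_lip1[OF orbit_le1[OF z] orbit_le1[OF z]] commute by metis
  also have "\<dots> \<le> real p * (real p ^ t * av ((ff ^^ i) z - (ff ^^ j) z))"
    using Suc by (intro mult_left_mono) auto
  finally show ?case by (simp add: algebra_simps)
qed

lemma not_attr:
  assumes lim: "filterlim M at_top sequentially"
  shows "not_attracted av rhat ff {z. av (z - z0) \<le> S_rad p}"
  unfolding not_attracted_def
proof
  assume "\<exists>z\<in>{z. av (z - z0) \<le> S_rad p}. \<exists>c r w k. 0 < r \<and> av (z - c) < r \<and> w \<in> K_set av rhat ff \<and>
      attracting_cycle av ff w k \<and> {y. av (y - c) < r} \<subseteq> basin av ff w k"
  then obtain z c r w k where z: "av (z - z0) \<le> S_rad p" and zc: "av (z - c) < r"
    and ac: "attracting_cycle av ff w k" and bs: "{y. av (y - c) < r} \<subseteq> basin av ff w k"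
    by blast
  have k: "k > 0" using ac unfolding attracting_cycle_def by blast
  have "z \<in> basin av ff w k" using bs zc by blast
  then obtain L where L: "v_lim av (\<lambda>n. (ff ^^ (n * k)) z) L" unfolding basin_def by blast
  let ?Y = "\<lambda>n. (ff ^^ n) z"
  define eps :: real where "eps = 1 / real p ^ k"
  have eps: "eps > 0" unfolding eps_def using p2r by simp
  obtain N where N: "\<And>n. n \<ge> N \<Longrightarrow> av (?Y (n * k) - L) < eps"
    using L eps unfolding v_lim_def LIMSEQ_iff by auto
  have per: "\<forall>j\<ge>N * k. itin m M j = itin m M (j + k)"
  proof (intro allI impI)
    fix j assume j: "N * k \<le> j"
    define n where "n = j div k"
    define t where "t = j mod k"
    have jn: "j = n * k + t" unfolding n_def t_def by simp
    have tk: "t < k" unfolding t_def using k by simp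
    have nN: "n \<ge> N" unfolding n_def using j k by (metis div_le_mono div_mult_self_is_m)
    have jk: "j + k = Suc n * k + t" using jn by simp
    have small: "av (?Y (n * k) - ?Y (Suc n * k)) < eps"
    proof -
      have "av (?Y (n * k) - ?Y (Suc n * k)) \<le> max (av (?Y (n * k) - L)) (av (L - ?Y (Suc n * k)))" by (rule tri)
      moreover have "av (?Y (n * k) - L) < eps" using N nN by simp
      moreover have "av (L - ?Y (Suc n * k)) < eps" using N[of "Suc n"] nN commute by (metis le_SucI)
      ultimately show ?thesis by simp
    qed
    have "av (?Y j - ?Y (j + k)) \<le> real p ^ t * av (?Y (n * k) - ?Y (Suc n * k))"
      unfolding jk using iter_lip[OF z, of "n * k" t "Suc n * k"] jn by (simp add: add.commute)
    also have "\<dots> < real p ^ t * eps" using small p2r by (intro mult_strict_left_mono) auto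
    also have "\<dots> \<le> 1"
    proof -
      have "real p ^ t \<le> real p ^ k" using tk p2r by (intro power_increasing) auto
      then show ?thesis unfolding eps_def using p2r by (simp add: divide_le_eq)
    qed
    finally have yy: "av (?Y j - ?Y (j + k)) < 1" .
    have a1: "av (xx j - ?Y j) \<le> S_rad p" using track_all[OF z, of j] commute by metis
    have a2: "av (?Y (j + k) - xx (j + k)) \<le> S_rad p" using track_all[OF z, of "j + k"] by simp
    have "av (xx j - xx (j + k)) \<le> max (av (xx j - ?Y j)) (av (?Y j - xx (j + k)))" by (rule tri)
    moreover have "av (?Y j - xx (j + k)) \<le> max (av (?Y j - ?Y (j + k))) (av (?Y (j + k) - xx (j + k)))" by (rule tri)
    ultimately have "av (xx j - xx (j + k)) < 1" using a1 a2 yy S_facts[OF p2] by auto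
    then show "itin m M j = itin m M (j + k)" by (rule itin_eq)
  qed
  show False by (rule no_period[OF pos lim k per])
qed

end

theorem lemma3p10:
  fixes av :: "'a::field_char_0 \<Rightarrow> real" and p :: nat and rhat :: real
    and a :: "nat \<Rightarrow> 'a" and m M :: "nat \<Rightarrow> nat" and l0 z0 :: 'a
  assumes Cp: "is_Cp av p"
    and rhat: "rhat > 1" "\<exists>c. c \<noteq> 0 \<and> av c = rhat"
    and HB: "in_HB av rhat a" and Qsmall: "ps_norm av rhat a < rho p"
    and pos: "\<forall>i. m i > 0 \<and> M i > 0"
    and prodle: "\<forall>i. (\<Prod>k\<in>{1..<m i}. rho_seq p k) * real p ^ M i \<le> 1"
    and lam: "av (l0 - 1) < 1"
    and zK: "z0 \<in> K_set av rhat (Q_lam av p a l0)"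
    and itinerary: "\<forall>n. (itin m M n = 0 \<longrightarrow> av ((Q_lam av p a l0 ^^ n) z0) < 1)
                       \<and> (itin m M n = 1 \<longrightarrow> av ((Q_lam av p a l0 ^^ n) z0 - 1) < 1)"
  shows "{z. av (z - z0) \<le> S_rad p} \<subseteq> K_set av rhat (Q_lam av p a l0)
     \<and> (filterlim M at_top sequentially \<longrightarrow>
          wandering_disc (Q_lam av p a l0) {z. av (z - z0) \<le> S_rad p}
        \<and> not_attracted av rhat (Q_lam av p a l0) {z. av (z - z0) \<le> S_rad p})"
proof -
  have na: "nonarch_abs av" using Cp unfolding is_Cp_def by blast
  interpret dyn av p rhat a l0 m M z0
    by (unfold_locales) (use na Cp rhat HB Qsmall lam pos prodle itinerary in auto)
  show ?thesis using D_sub_K wandering not_attr by blast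
qed

end
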